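(* Let $f$ be a homeomorphism of a compact manifold $M$ whose non-wandering set is all of $M$. Let $M_1\to M$ be a finite cover and let $g:M_1\to M_1$ be a lift of an iterate $f^k$ ($k\ge1$) of $f$. Then the non-wandering set of $g$ is all of $M_1$.
   Context: The non-wandering set of a homeomorphism $\phi$ of $X$ is the set of $x$ such that for every neighbourhood $U$ of $x$ there is $n>0$ with $\phi^n(U)\cap U\neq\emptyset$. *)

theory Defs
  imports "HOL-Analysis.Analysis"
begin

definition locally_euclidean :: "'a topology \<Rightarrow> nat \<Rightarrow> bool" where
  "locally_euclidean X n \<longleftrightarrow>
     (\<forall>x \<in> topspace X. \<exists>U V. openin X U \<and> x \<in> U \<and> openin (Euclidean_space n) V \<and>
        subtopology X U homeomorphic_space subtopology (Euclidean_space n) V)"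

definition topological_manifold :: "'a topology \<Rightarrow> bool" where
  "topological_manifold X \<longleftrightarrow>
     Hausdorff_space X \<and> second_countable X \<and> (\<exists>n. locally_euclidean X n)"

definition finite_covering_map :: "'b topology \<Rightarrow> 'a topology \<Rightarrow> ('b \<Rightarrow> 'a) \<Rightarrow> bool" where
  "finite_covering_map E X p \<longleftrightarrow>
     continuous_map E X p \<and> p ` topspace E = topspace X \<and>
     (\<forall>x \<in> topspace X. finite {e \<in> topspace E. p e = x}) \<and>
     (\<forall>x \<in> topspace X. \<exists>U. openin X U \<and> x \<in> U \<and>
        (\<exists>\<V>. \<Union>\<V> = {e \<in> topspace E. p e \<in> U} \<and> pairwise disjnt \<V> \<and>
             (\<forall>V \<in> \<V>. openin E V \<and> homeomorphic_map (subtopology E V) (subtopology X U) p)))"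

definition non_wandering_set :: "'a topology \<Rightarrow> ('a \<Rightarrow> 'a) \<Rightarrow> 'a set" where
  "non_wandering_set X \<phi> =
     {x \<in> topspace X. \<forall>U. openin X U \<and> x \<in> U \<longrightarrow> (\<exists>n>0. (\<phi> ^^ n) ` U \<inter> U \<noteq> {})}"

end

theory Submission
  imports Defs
begin


lemma strict_chain:
  fixes T :: "nat \<Rightarrow> nat"
  assumes "\<forall>i<j. T i < T (Suc i)" "a < b" "b \<le> j"
  shows "T a < T b"
  using assms(2,3)
proof (induction b)
  case 0 then show ?case by simp
next
  case (Suc b)
  have "T b < T (Suc b)" using assms(1) Suc.prems by simp
  then show ?case using Suc by (cases "a = b") auto
qed

lemma core_inv:
  fixes Gi :: "nat \<Rightarrow> 'y \<Rightarrow> 'y" and lift :: "'s \<Rightarrow> 'o \<Rightarrow> 'y set" and P :: "'o \<Rightarrow> bool"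
  assumes G0: "\<And>\<sigma> Q x. \<sigma>\<in>S \<Longrightarrow> x \<in> lift \<sigma> Q \<Longrightarrow> Gi 0 x = x"
  and Gadd: "\<And>m n x. Gi (m+n) x = Gi m (Gi n x)"
  and step: "\<And>Q. P Q \<Longrightarrow> \<exists>Q' n \<pi>. P Q' \<and> (\<forall>\<sigma>. lift \<sigma> Q' \<subseteq> lift \<sigma> Q) \<and> n > 0 \<and> \<pi> ` S \<subseteq> S \<and> inj_on \<pi> S
        \<and> (\<forall>\<sigma>\<in>S. \<forall>x\<in>lift \<sigma> Q'. Gi n x \<in> lift (\<pi> \<sigma>) Q)"
  shows "\<forall>Q. P Q \<longrightarrow> (\<exists>Q' T \<rho>. P Q' \<and> (\<forall>\<sigma>. lift \<sigma> Q' \<subseteq> lift \<sigma> Q) \<and> (\<forall>i<j. T i < T (Suc i))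
     \<and> (\<forall>i\<le>j. \<rho> i ` S \<subseteq> S \<and> inj_on (\<rho> i) S)
     \<and> (\<forall>i\<le>j. \<forall>\<sigma>\<in>S. \<forall>x\<in>lift \<sigma> Q'. Gi (T i) x \<in> lift (\<rho> i \<sigma>) Q))"
proof (induction j)
  case 0
  show ?case
  proof (intro allI impI)
    fix Q assume "P Q"
    show "\<exists>Q' T \<rho>. P Q' \<and> (\<forall>\<sigma>. lift \<sigma> Q' \<subseteq> lift \<sigma> Q) \<and> (\<forall>i<0. T i < T (Suc i))
     \<and> (\<forall>i\<le>0. \<rho> i ` S \<subseteq> S \<and> inj_on (\<rho> i) S)
     \<and> (\<forall>i\<le>0. \<forall>\<sigma>\<in>S. \<forall>x\<in>lift \<sigma> Q'. Gi (T i) x \<in> lift (\<rho> i \<sigma>) Q)"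
      apply (rule exI[of _ Q], rule exI[of _ "\<lambda>_. 0"], rule exI[of _ "\<lambda>_. id"])
      using \<open>P Q\<close> G0 by (simp; blast)
  qed
next
  case (Suc j)
  show ?case
  proof (intro allI impI)
    fix Q assume "P Q"
    obtain Q1 n \<pi> where Q1: "P Q1" "\<forall>\<sigma>. lift \<sigma> Q1 \<subseteq> lift \<sigma> Q" "n > 0" "\<pi> ` S \<subseteq> S" "inj_on \<pi> S"
      "\<forall>\<sigma>\<in>S. \<forall>x\<in>lift \<sigma> Q1. Gi n x \<in> lift (\<pi> \<sigma>) Q"
      using step[OF \<open>P Q\<close>] by blast
    obtain Q' T \<rho> where IH: "P Q'" "\<forall>\<sigma>. lift \<sigma> Q' \<subseteq> lift \<sigma> Q1" "\<forall>i<j. T i < T (Suc i)"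
      "\<forall>i\<le>j. \<rho> i ` S \<subseteq> S \<and> inj_on (\<rho> i) S"
      "\<forall>i\<le>j. \<forall>\<sigma>\<in>S. \<forall>x\<in>lift \<sigma> Q'. Gi (T i) x \<in> lift (\<rho> i \<sigma>) Q1"
      using Suc.IH[rule_format, OF Q1(1)] by (elim exE conjE) (rule that)
    define T' where "T' i = (if i = 0 then 0 else n + T (i - 1))" for i
    define \<rho>' where "\<rho>' i = (if i = 0 then id else \<pi> \<circ> \<rho> (i - 1))" for i
    have A: "\<forall>\<sigma>. lift \<sigma> Q' \<subseteq> lift \<sigma> Q" using IH(2) Q1(2) by blast
    have B: "\<forall>i<Suc j. T' i < T' (Suc i)"
    proof (intro allI impI)
      fix i assume "i < Suc j"
      then show "T' i < T' (Suc i)"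
        using IH(3) Q1(3) unfolding T'_def by (cases i) auto
    qed
    have C: "\<forall>i\<le>Suc j. \<rho>' i ` S \<subseteq> S \<and> inj_on (\<rho>' i) S"
    proof (intro allI impI)
      fix i assume "i \<le> Suc j"
      show "\<rho>' i ` S \<subseteq> S \<and> inj_on (\<rho>' i) S"
      proof (cases i)
        case 0 then show ?thesis unfolding \<rho>'_def by simp
      next
        case (Suc i')
        then have "i' \<le> j" using \<open>i \<le> Suc j\<close> by simp
        then have r: "\<rho> i' ` S \<subseteq> S" "inj_on (\<rho> i') S" using IH(4) by auto
        have "inj_on \<pi> (\<rho> i' ` S)" using Q1(5) r(1) inj_on_subset by blast
        then have "inj_on (\<pi> \<circ> \<rho> i') S" using r(2) comp_inj_on by blast
        moreover have "(\<pi> \<circ> \<rho> i') ` S \<subseteq> S" using r(1) Q1(4) by (auto simp: image_subset_iff)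
        ultimately show ?thesis unfolding \<rho>'_def using Suc by simp
      qed
    qed
    have D: "\<forall>i\<le>Suc j. \<forall>\<sigma>\<in>S. \<forall>x\<in>lift \<sigma> Q'. Gi (T' i) x \<in> lift (\<rho>' i \<sigma>) Q"
    proof (intro allI impI ballI)
      fix i \<sigma> x assume i: "i \<le> Suc j" and s: "\<sigma> \<in> S" and x: "x \<in> lift \<sigma> Q'"
      show "Gi (T' i) x \<in> lift (\<rho>' i \<sigma>) Q"
      proof (cases i)
        case 0 then show ?thesis unfolding T'_def \<rho>'_def using G0[OF s x] A x by auto
      next
        case (Suc i')
        then have "i' \<le> j" using i by simp
        then have "Gi (T i') x \<in> lift (\<rho> i' \<sigma>) Q1" "\<rho> i' \<sigma> \<in> S" using IH(4,5) s x by auto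
        then have "Gi n (Gi (T i') x) \<in> lift (\<pi> (\<rho> i' \<sigma>)) Q" using Q1(6) by blast
        then show ?thesis unfolding T'_def \<rho>'_def using Suc Gadd by simp
      qed
    qed
    show "\<exists>Q' T \<rho>. P Q' \<and> (\<forall>\<sigma>. lift \<sigma> Q' \<subseteq> lift \<sigma> Q) \<and> (\<forall>i<Suc j. T i < T (Suc i))
     \<and> (\<forall>i\<le>Suc j. \<rho> i ` S \<subseteq> S \<and> inj_on (\<rho> i) S)
     \<and> (\<forall>i\<le>Suc j. \<forall>\<sigma>\<in>S. \<forall>x\<in>lift \<sigma> Q'. Gi (T i) x \<in> lift (\<rho> i \<sigma>) Q)"
      apply (rule exI[of _ Q'], rule exI[of _ T'], rule exI[of _ \<rho>'])
      using IH(1) A B C D by (intro conjI)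
  qed
qed

lemma core:
  fixes Gi :: "nat \<Rightarrow> 'y \<Rightarrow> 'y" and lift :: "'s \<Rightarrow> 'o \<Rightarrow> 'y set" and P :: "'o \<Rightarrow> bool"
  assumes finS: "finite S"
  and ne: "\<And>Q \<sigma>. P Q \<Longrightarrow> \<sigma>\<in>S \<Longrightarrow> lift \<sigma> Q \<noteq> {}"
  and G0: "\<And>\<sigma> Q x. \<sigma>\<in>S \<Longrightarrow> x \<in> lift \<sigma> Q \<Longrightarrow> Gi 0 x = x"
  and Gadd: "\<And>m n x. Gi (m+n) x = Gi m (Gi n x)"
  and step: "\<And>Q. P Q \<Longrightarrow> \<exists>Q' n \<pi>. P Q' \<and> (\<forall>\<sigma>. lift \<sigma> Q' \<subseteq> lift \<sigma> Q) \<and> n > 0 \<and> \<pi> ` S \<subseteq> S \<and> inj_on \<pi> S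
        \<and> (\<forall>\<sigma>\<in>S. \<forall>x\<in>lift \<sigma> Q'. Gi n x \<in> lift (\<pi> \<sigma>) Q)"
  and PO: "P Q" and s0: "\<sigma>0 \<in> S"
  shows "\<exists>x a b. a < b \<and> Gi a x \<in> lift \<sigma>0 Q \<and> Gi b x \<in> lift \<sigma>0 Q"
proof -
  define N where "N = card (S \<rightarrow>\<^sub>E S)"
  obtain Q' T \<rho> where I: "P Q'" "\<forall>\<sigma>. lift \<sigma> Q' \<subseteq> lift \<sigma> Q" "\<forall>i<N. T i < T (Suc i)"
     "\<forall>i\<le>N. \<rho> i ` S \<subseteq> S \<and> inj_on (\<rho> i) S"
     "\<forall>i\<le>N. \<forall>\<sigma>\<in>S. \<forall>x\<in>lift \<sigma> Q'. Gi (T i) x \<in> lift (\<rho> i \<sigma>) Q"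
  proof -
    have "\<forall>Q. P Q \<longrightarrow> (\<exists>Q' T \<rho>. P Q' \<and> (\<forall>\<sigma>. lift \<sigma> Q' \<subseteq> lift \<sigma> Q) \<and> (\<forall>i<N. T i < T (Suc i))
     \<and> (\<forall>i\<le>N. \<rho> i ` S \<subseteq> S \<and> inj_on (\<rho> i) S)
     \<and> (\<forall>i\<le>N. \<forall>\<sigma>\<in>S. \<forall>x\<in>lift \<sigma> Q'. Gi (T i) x \<in> lift (\<rho> i \<sigma>) Q))"
    proof (rule core_inv)
      show "\<And>\<sigma> Q x. \<sigma>\<in>S \<Longrightarrow> x \<in> lift \<sigma> Q \<Longrightarrow> Gi 0 x = x" by (rule G0)
      show "\<And>m n x. Gi (m+n) x = Gi m (Gi n x)" by (rule Gadd)
      show "\<And>Q. P Q \<Longrightarrow> \<exists>Q' n \<pi>. P Q' \<and> (\<forall>\<sigma>. lift \<sigma> Q' \<subseteq> lift \<sigma> Q) \<and> n > 0 \<and> \<pi> ` S \<subseteq> S \<and> inj_on \<pi> S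
        \<and> (\<forall>\<sigma>\<in>S. \<forall>x\<in>lift \<sigma> Q'. Gi n x \<in> lift (\<pi> \<sigma>) Q)" by (rule step)
    qed
    from this[rule_format, OF PO] show ?thesis by (elim exE conjE) (rule that)
  qed
  define \<phi> where "\<phi> i = restrict (\<rho> i) S" for i
  have sub: "\<phi> ` {..N} \<subseteq> S \<rightarrow>\<^sub>E S" using I(4) unfolding \<phi>_def by (auto simp: image_subset_iff)
  have fin: "finite (S \<rightarrow>\<^sub>E S)" using finS by (simp add: finite_PiE)
  have "\<not> inj_on \<phi> {..N}"
  proof
    assume "inj_on \<phi> {..N}"
    then have "card {..N} \<le> card (S \<rightarrow>\<^sub>E S)" using card_inj_on_le[OF _ sub fin] by blast
    then show False unfolding N_def by simp
  qed
  then obtain a b where ab: "a \<le> N" "b \<le> N" "a \<noteq> b" "\<phi> a = \<phi> b" unfolding inj_on_def by auto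
  obtain a' b' where ab': "a' < b'" "b' \<le> N" "\<phi> a' = \<phi> b'"
    using ab by (metis linorder_neqE_nat)
  have "\<rho> a' ` S = S" using I(4) ab' by (intro endo_inj_surj[OF finS]) auto
  then obtain \<sigma> where s: "\<sigma> \<in> S" "\<rho> a' \<sigma> = \<sigma>0" using s0 by (metis imageE)
  have eq: "\<rho> b' \<sigma> = \<sigma>0" using s ab'(3) unfolding \<phi>_def by (metis restrict_apply')
  obtain x where x: "x \<in> lift \<sigma> Q'" using ne[OF I(1) s(1)] by blast
  have "a' \<le> N" using ab' by simp
  have "Gi (T a') x \<in> lift (\<rho> a' \<sigma>) Q" using I(5) \<open>a' \<le> N\<close> s(1) x by blast
  moreover have "Gi (T b') x \<in> lift (\<rho> b' \<sigma>) Q" using I(5) ab'(2) s(1) x by blast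
  ultimately have "Gi (T a') x \<in> lift \<sigma>0 Q" "Gi (T b') x \<in> lift \<sigma>0 Q" using s(2) eq by simp_all
  moreover have "T a' < T b'" using strict_chain[OF I(3) ab'(1,2)] .
  ultimately show ?thesis by blast
qed



lemma continuous_map_funpow:
  assumes "continuous_map X X f" shows "continuous_map X X (f ^^ n)"
proof (induction n)
  case 0 then show ?case by simp
next
  case (Suc n) then show ?case by (simp only: funpow.simps) (rule continuous_map_compose[OF _ assms])
qed

lemma mod_inj_aux:
  fixes a b n k :: nat
  assumes "a < k" "b < k" "(a + n) mod k = (b + n) mod k"
  shows "a = b"
proof -
  have "k dvd (b + n) - (a + n)" if "a \<le> b" "a < k" "b < k" "(a + n) mod k = (b + n) mod k" for a b
    using that mod_eq_dvd_iff_nat[of "a + n" "b + n" k] by simp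
  have *: "a = b" if "a \<le> b" "a < k" "b < k" "(a + n) mod k = (b + n) mod k" for a b
  proof (rule ccontr)
    assume "a \<noteq> b"
    have "k dvd b - a" using mod_eq_dvd_iff_nat[of "a + n" "b + n" k] that by simp
    moreover have "0 < b - a" "b - a < k" using that \<open>a \<noteq> b\<close> by auto
    ultimately show False using nat_dvd_not_less by blast
  qed
  show ?thesis using *[of a b] *[of b a] assms by (cases "a \<le> b") auto
qed

lemma stage1:
  assumes cont: "continuous_map M M f" and nw: "non_wandering_set M f = topspace M" and k: "k \<ge> 1"
  shows "non_wandering_set M (f ^^ k) = topspace M"
proof -
  have "x \<in> non_wandering_set M (f ^^ k)" if x: "x \<in> topspace M" for x
    unfolding non_wandering_set_def
  proof (intro CollectI conjI allI impI x)
    fix U assume U: "openin M U \<and> x \<in> U"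
    define S where "S = {..<k}"
    define lift where "lift \<sigma> Q = Q \<times> {\<sigma>}" for \<sigma> :: nat and Q :: "'a set"
    define P where "P Q \<longleftrightarrow> openin M Q \<and> Q \<noteq> {}" for Q
    define Gi where "Gi n = (\<lambda>(y, i). ((f ^^ n) y, (i + n) mod k))" for n
    have "\<exists>z a b. a < b \<and> Gi a z \<in> lift 0 U \<and> Gi b z \<in> lift 0 U"
    proof (rule core[where S=S and lift=lift and P=P and Gi=Gi])
      show "finite S" unfolding S_def by simp
      show "lift \<sigma> Q \<noteq> {}" if "P Q" "\<sigma> \<in> S" for Q \<sigma> using that unfolding P_def lift_def by auto
      show "Gi 0 z = z" if "\<sigma> \<in> S" "z \<in> lift \<sigma> Q" for \<sigma> Q z
        using that unfolding S_def lift_def Gi_def by auto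
      show "Gi (m + n) z = Gi m (Gi n z)" for m n z
      proof -
        obtain y i where z: "z = (y, i)" by (cases z)
        have 1: "(f ^^ (m + n)) y = (f ^^ m) ((f ^^ n) y)" by (simp add: funpow_add)
        have 2: "(i + (m + n)) mod k = ((i + n) mod k + m) mod k"
          by (metis mod_add_left_eq add.commute add.left_commute)
        show ?thesis unfolding Gi_def z using 1 2 by simp
      qed
      show "P U" unfolding P_def using U by auto
      show "0 \<in> S" unfolding S_def using k by simp
      show "\<exists>Q' n \<pi>. P Q' \<and> (\<forall>\<sigma>. lift \<sigma> Q' \<subseteq> lift \<sigma> Q) \<and> n > 0 \<and> \<pi> ` S \<subseteq> S \<and> inj_on \<pi> S
        \<and> (\<forall>\<sigma>\<in>S. \<forall>x\<in>lift \<sigma> Q'. Gi n x \<in> lift (\<pi> \<sigma>) Q)" if PQ: "P Q" for Q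
      proof -
        obtain y where y: "y \<in> Q" using PQ unfolding P_def by blast
        have "y \<in> topspace M" using y PQ openin_subset unfolding P_def by blast
        then have "y \<in> non_wandering_set M f" using nw by simp
        then obtain n where n: "n > 0" "(f ^^ n) ` Q \<inter> Q \<noteq> {}"
          using y PQ unfolding non_wandering_set_def P_def by blast
        define Q' where "Q' = Q \<inter> {z \<in> topspace M. (f ^^ n) z \<in> Q}"
        have "openin M Q'" unfolding Q'_def using PQ unfolding P_def
          by (intro openin_Int openin_continuous_map_preimage[OF continuous_map_funpow[OF cont]]) auto
        moreover have "Q' \<noteq> {}"
        proof -
          obtain w where w: "w \<in> Q" "(f ^^ n) w \<in> Q" using n(2) by blast
          have "w \<in> topspace M" using w(1) PQ openin_subset unfolding P_def by blast
          then show ?thesis using w unfolding Q'_def by blast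
        qed
        ultimately have PQ': "P Q'" unfolding P_def by simp
        define \<pi> where "\<pi> \<sigma> = (\<sigma> + n) mod k" for \<sigma>
        have "\<pi> ` S \<subseteq> S" unfolding \<pi>_def S_def using k by auto
        moreover have "inj_on \<pi> S" unfolding inj_on_def \<pi>_def S_def using mod_inj_aux by blast
        moreover have "\<forall>\<sigma>\<in>S. \<forall>x\<in>lift \<sigma> Q'. Gi n x \<in> lift (\<pi> \<sigma>) Q"
          unfolding lift_def Gi_def \<pi>_def Q'_def by auto
        moreover have "\<forall>\<sigma>. lift \<sigma> Q' \<subseteq> lift \<sigma> Q" unfolding lift_def Q'_def by auto
        ultimately show ?thesis using PQ' n(1) by (intro exI[of _ Q'] exI[of _ n] exI[of _ \<pi>]) simp
      qed
    qed
    then obtain z a b where zab: "a < b" "Gi a z \<in> lift 0 U" "Gi b z \<in> lift 0 U" by blast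
    obtain y i where z: "z = (y, i)" by (cases z)
    have A: "(f ^^ a) y \<in> U" "(i + a) mod k = 0" "(f ^^ b) y \<in> U" "(i + b) mod k = 0"
      using zab(2,3) unfolding z Gi_def lift_def by auto
    have "k dvd (i + b) - (i + a)" using A(2,4) by (intro dvd_diff_nat) auto
    then obtain m where m: "b - a = k * m" by (auto elim: dvdE)
    have "m > 0" using m zab(1) by (cases m) auto
    have "((f ^^ k) ^^ m) ((f ^^ a) y) = (f ^^ (k * m)) ((f ^^ a) y)" by (simp add: funpow_mult)
    also have "\<dots> = (f ^^ (b - a)) ((f ^^ a) y)" using m by simp
    also have "\<dots> = (f ^^ (b - a + a)) y" by (simp add: funpow_add)
    also have "\<dots> = (f ^^ b) y" using zab(1) by simp
    finally have "((f ^^ k) ^^ m) ((f ^^ a) y) = (f ^^ b) y" .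
    then have "(f ^^ b) y \<in> ((f ^^ k) ^^ m) ` U" using A(1) by (metis image_eqI)
    then have "(f ^^ b) y \<in> ((f ^^ k) ^^ m) ` U \<inter> U" using A(3) by (rule IntI)
    then have "((f ^^ k) ^^ m) ` U \<inter> U \<noteq> {}" by (rule ex_in_conv[THEN iffD1, OF exI])
    with \<open>m > 0\<close> show "\<exists>n>0. ((f ^^ k) ^^ n) ` U \<inter> U \<noteq> {}" by (rule exI[where x=m, OF conjI])
  qed
  moreover have "non_wandering_set M (f ^^ k) \<subseteq> topspace M" unfolding non_wandering_set_def by (rule Collect_subset)
  ultimately show ?thesis by (intro subset_antisym subsetI) auto
qed


lemma sheet_facts:
  assumes V: "openin E V" and hm: "homeomorphic_map (subtopology E V) (subtopology X U) p" and U: "openin X U"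
  shows "p ` V = U" "inj_on p V" "\<And>A. openin E A \<Longrightarrow> A \<subseteq> V \<Longrightarrow> openin X (p ` A)"
proof -
  have tV: "topspace (subtopology E V) = V" using openin_subset[OF V] by auto
  have tU: "topspace (subtopology X U) = U" using openin_subset[OF U] by auto
  show "p ` V = U" using homeomorphic_imp_surjective_map[OF hm] tV tU by simp
  show "inj_on p V" using homeomorphic_imp_injective_map[OF hm] tV by simp
  fix A assume A: "openin E A" "A \<subseteq> V"
  have "openin (subtopology E V) A" unfolding openin_subtopology using A by (intro exI[of _ A]) auto
  moreover have "A \<subseteq> topspace (subtopology E V)" using A(2) tV by simp
  ultimately have "openin (subtopology X U) (p ` A)" using homeomorphic_map_openness[OF hm] by blast
  then show "openin X (p ` A)" using openin_trans_full U by blast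
qed

lemma funpow_facts:
  assumes hg: "homeomorphic_map M1 M1 g"
  shows "\<And>x. x \<in> topspace M1 \<Longrightarrow> (g ^^ n) x \<in> topspace M1"
    and "continuous_map M1 M1 (g ^^ n)"
    and "inj_on (g ^^ n) (topspace M1)"
proof -
  have c: "continuous_map M1 M1 g" using homeomorphic_imp_continuous_map[OF hg] .
  show cn: "continuous_map M1 M1 (g ^^ n)" by (rule continuous_map_funpow[OF c])
  show "\<And>x. x \<in> topspace M1 \<Longrightarrow> (g ^^ n) x \<in> topspace M1"
    using continuous_map_image_subset_topspace[OF cn] by blast
  have ig: "inj_on g (topspace M1)" using homeomorphic_imp_injective_map[OF hg] .
  have gt: "g ` topspace M1 \<subseteq> topspace M1" using continuous_map_image_subset_topspace[OF c] .
  show "inj_on (g ^^ n) (topspace M1)"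
  proof (induction n)
    case 0 then show ?case by simp
  next
    case (Suc n)
    have "(g ^^ n) ` topspace M1 \<subseteq> topspace M1"
      using continuous_map_image_subset_topspace[OF continuous_map_funpow[OF c]] .
    then have "inj_on g ((g ^^ n) ` topspace M1)" using ig inj_on_subset by blast
    then have "inj_on (g \<circ> g ^^ n) (topspace M1)" using Suc.IH comp_inj_on by blast
    then show ?case by (simp add: comp_def)
  qed
qed

lemma funpow_lift:
  assumes hg: "homeomorphic_map M1 M1 g" and lift: "\<forall>y\<in>topspace M1. p (g y) = h (p y)"
    and x: "x \<in> topspace M1"
  shows "p ((g ^^ n) x) = (h ^^ n) (p x)"
proof (induction n)
  case 0 then show ?case by simp
next
  case (Suc n)
  have "(g ^^ n) x \<in> topspace M1" using funpow_facts(1)[OF hg x] .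
  then show ?case using lift Suc.IH by simp
qed



lemma stage2_step:
  assumes Vs: "finite Vs"
    and hV: "\<And>V. V\<in>Vs \<Longrightarrow> openin M1 V \<and> p ` V = U \<and> inj_on p V \<and> (\<forall>A. openin M1 A \<and> A \<subseteq> V \<longrightarrow> openin M (p ` A))"
    and disj: "pairwise disjnt Vs"
    and cov: "\<And>e. e \<in> topspace M1 \<Longrightarrow> p e \<in> U \<Longrightarrow> \<exists>V\<in>Vs. e \<in> V"
    and hg: "homeomorphic_map M1 M1 g"
    and liftg: "\<forall>y\<in>topspace M1. p (g y) = h (p y)"
    and hc: "continuous_map M M h" and pc: "continuous_map M1 M p"
    and nwh: "non_wandering_set M h = topspace M"
    and Q: "openin M Q" "Q \<noteq> {}" "Q \<subseteq> U"
  shows "\<exists>Q' n \<pi>. (openin M Q' \<and> Q' \<noteq> {} \<and> Q' \<subseteq> Q) \<and> n > 0 \<and> \<pi> ` Vs \<subseteq> Vs \<and> inj_on \<pi> Vs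
     \<and> (\<forall>V\<in>Vs. \<forall>e\<in>V. p e \<in> Q' \<longrightarrow> (g ^^ n) e \<in> \<pi> V \<and> p ((g ^^ n) e) \<in> Q)"
proof -
  have Vt: "V \<subseteq> topspace M1" if "V \<in> Vs" for V using hV[OF that] openin_subset by blast
  obtain x where x: "x \<in> Q" using Q(2) by blast
  have xt: "x \<in> topspace M" using x Q(1) openin_subset by blast
  then have "x \<in> non_wandering_set M h" using nwh by simp
  then have "\<forall>U. openin M U \<and> x \<in> U \<longrightarrow> (\<exists>n>0. (h ^^ n) ` U \<inter> U \<noteq> {})"
    unfolding non_wandering_set_def by blast
  then obtain n where n: "n > 0" "(h ^^ n) ` Q \<inter> Q \<noteq> {}" using Q(1) x by blast
  define Q1 where "Q1 = Q \<inter> {z \<in> topspace M. (h ^^ n) z \<in> Q}"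
  have Q1o: "openin M Q1" unfolding Q1_def
    by (intro openin_Int Q(1) openin_continuous_map_preimage[OF continuous_map_funpow[OF hc]] Q(1))
  have Q1ne: "Q1 \<noteq> {}"
  proof -
    obtain w where w: "w \<in> Q" "(h ^^ n) w \<in> Q" using n(2) by blast
    have "w \<in> topspace M" using w(1) Q(1) openin_subset by blast
    then show ?thesis using w unfolding Q1_def by blast
  qed
  have Q1Q: "Q1 \<subseteq> Q" unfolding Q1_def by blast
  have claim: "\<exists>Q''. openin M Q'' \<and> Q'' \<noteq> {} \<and> Q'' \<subseteq> Q1 \<and>
      (\<exists>\<pi>. \<forall>V\<in>S'. \<pi> V \<in> Vs \<and> (\<forall>e\<in>V. p e \<in> Q'' \<longrightarrow> (g ^^ n) e \<in> \<pi> V))"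
    if "finite S'" "S' \<subseteq> Vs" for S'
    using that
  proof (induction S' rule: finite_induct)
    case empty
    show ?case using Q1o Q1ne by blast
  next
    case (insert V S')
    obtain Q'' \<pi> where I: "openin M Q''" "Q'' \<noteq> {}" "Q'' \<subseteq> Q1"
      "\<forall>V\<in>S'. \<pi> V \<in> Vs \<and> (\<forall>e\<in>V. p e \<in> Q'' \<longrightarrow> (g ^^ n) e \<in> \<pi> V)"
      using insert.IH insert.prems by blast
    have V: "V \<in> Vs" using insert.prems by blast
    note hVV = hV[OF V]
    obtain x1 where x1: "x1 \<in> Q''" using I(2) by blast
    have "x1 \<in> U" using x1 I(3) Q1Q Q(3) by blast
    then obtain e where e: "e \<in> V" "p e = x1" using hVV by (metis imageE)
    have et: "e \<in> topspace M1" using e Vt[OF V] by blast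
    have gnt: "(g ^^ n) e \<in> topspace M1" using funpow_facts(1)[OF hg et] .
    have "p ((g ^^ n) e) = (h ^^ n) x1" using funpow_lift[OF hg liftg et] e by simp
    moreover have "(h ^^ n) x1 \<in> Q" using x1 I(3) unfolding Q1_def by blast
    ultimately have "p ((g ^^ n) e) \<in> U" using Q(3) by auto
    then obtain V' where V': "V' \<in> Vs" "(g ^^ n) e \<in> V'" using cov[OF gnt] by blast
    define A where "A = V \<inter> {z \<in> topspace M1. p z \<in> Q''} \<inter> {z \<in> topspace M1. (g ^^ n) z \<in> V'}"
    have Ao: "openin M1 A" unfolding A_def
      by (intro openin_Int conjunct1[OF hVV] openin_continuous_map_preimage[OF pc I(1)]
          openin_continuous_map_preimage[OF funpow_facts(2)[OF hg]] conjunct1[OF hV[OF V'(1)]])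
    have AV: "A \<subseteq> V" unfolding A_def by blast
    have eA: "e \<in> A" unfolding A_def using e et x1 V'(2) by blast
    define Q3 where "Q3 = p ` A"
    have Q3o: "openin M Q3" unfolding Q3_def using hVV Ao AV by blast
    have Q3ne: "Q3 \<noteq> {}" unfolding Q3_def using eA by blast
    have Q3s: "Q3 \<subseteq> Q''" unfolding Q3_def A_def by blast
    define \<pi>' where "\<pi>' = \<pi>(V := V')"
    have "\<forall>W\<in>insert V S'. \<pi>' W \<in> Vs \<and> (\<forall>z\<in>W. p z \<in> Q3 \<longrightarrow> (g ^^ n) z \<in> \<pi>' W)"
    proof
      fix W assume W: "W \<in> insert V S'"
      show "\<pi>' W \<in> Vs \<and> (\<forall>z\<in>W. p z \<in> Q3 \<longrightarrow> (g ^^ n) z \<in> \<pi>' W)"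
      proof (cases "W = V")
        case True
        have "(g ^^ n) z \<in> V'" if z: "z \<in> V" "p z \<in> Q3" for z
        proof -
          obtain a where a: "a \<in> A" "p a = p z" using z(2) unfolding Q3_def by (metis imageE)
          have "a = z" using a AV z(1) hVV unfolding inj_on_def by blast
          then show ?thesis using a(1) unfolding A_def by blast
        qed
        then show ?thesis using True V'(1) unfolding \<pi>'_def by simp
      next
        case False
        then have "W \<in> S'" using W by blast
        then show ?thesis using False I(4) Q3s unfolding \<pi>'_def by auto
      qed
    qed
    moreover have "Q3 \<subseteq> Q1" using Q3s I(3) by blast
    ultimately show ?case using Q3o Q3ne by blast
  qed
  obtain Q'' \<pi> where C: "openin M Q''" "Q'' \<noteq> {}" "Q'' \<subseteq> Q1"
      "\<forall>V\<in>Vs. \<pi> V \<in> Vs \<and> (\<forall>e\<in>V. p e \<in> Q'' \<longrightarrow> (g ^^ n) e \<in> \<pi> V)"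
    using claim[OF Vs order_refl] by blast
  have im: "\<pi> ` Vs \<subseteq> Vs" using C(4) by blast
  obtain x2 where x2: "x2 \<in> Q''" using C(2) by blast
  have x2U: "x2 \<in> U" using x2 C(3) Q1Q Q(3) by blast
  have inj: "inj_on \<pi> Vs"
  proof (rule inj_onI)
    fix V1 V2 assume V1: "V1 \<in> Vs" and V2: "V2 \<in> Vs" and eq: "\<pi> V1 = \<pi> V2"
    obtain e1 where e1: "e1 \<in> V1" "p e1 = x2" using x2U hV[OF V1] by (metis imageE)
    obtain e2 where e2: "e2 \<in> V2" "p e2 = x2" using x2U hV[OF V2] by (metis imageE)
    have t1: "e1 \<in> topspace M1" using e1 Vt[OF V1] by blast
    have t2: "e2 \<in> topspace M1" using e2 Vt[OF V2] by blast
    have g1: "(g ^^ n) e1 \<in> \<pi> V1" using C(4) V1 e1 x2 by blast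
    have g2: "(g ^^ n) e2 \<in> \<pi> V1" using C(4) V2 e2 x2 eq by metis
    have "p ((g ^^ n) e1) = p ((g ^^ n) e2)"
      using funpow_lift[OF hg liftg t1] funpow_lift[OF hg liftg t2] e1 e2 by simp
    moreover have "inj_on p (\<pi> V1)" using hV im V1 by blast
    ultimately have "(g ^^ n) e1 = (g ^^ n) e2" using g1 g2 unfolding inj_on_def by blast
    then have "e1 = e2" using funpow_facts(3)[OF hg] t1 t2 unfolding inj_on_def by blast
    then have "\<not> disjnt V1 V2" using e1 e2 unfolding disjnt_def by blast
    then show "V1 = V2" using disj V1 V2 unfolding pairwise_def by blast
  qed
  have fin: "\<forall>V\<in>Vs. \<forall>e\<in>V. p e \<in> Q'' \<longrightarrow> (g ^^ n) e \<in> \<pi> V \<and> p ((g ^^ n) e) \<in> Q"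
  proof (intro ballI impI conjI)
    fix V e assume V: "V \<in> Vs" and e: "e \<in> V" "p e \<in> Q''"
    show "(g ^^ n) e \<in> \<pi> V" using C(4) V e by blast
    have t: "e \<in> topspace M1" using e Vt[OF V] by blast
    have "(h ^^ n) (p e) \<in> Q" using e(2) C(3) unfolding Q1_def by blast
    then show "p ((g ^^ n) e) \<in> Q" using funpow_lift[OF hg liftg t] by simp
  qed
  have "openin M Q'' \<and> Q'' \<noteq> {} \<and> Q'' \<subseteq> Q" using C(1,2,3) Q1Q by blast
  then show ?thesis using n(1) im inj fin by (intro exI[of _ Q''] exI[of _ n] exI[of _ \<pi>]) simp
qed



lemma stage2:
  assumes cov: "finite_covering_map M1 M p" and hg: "homeomorphic_map M1 M1 g"
    and hc: "continuous_map M M h" and nwh: "non_wandering_set M h = topspace M"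
    and liftg: "\<forall>y\<in>topspace M1. p (g y) = h (p y)"
  shows "non_wandering_set M1 g = topspace M1"
proof -
  have pc: "continuous_map M1 M p" and finfib: "\<forall>x \<in> topspace M. finite {e \<in> topspace M1. p e = x}"
    and ev: "\<forall>x \<in> topspace M. \<exists>U. openin M U \<and> x \<in> U \<and>
        (\<exists>\<V>. \<Union>\<V> = {e \<in> topspace M1. p e \<in> U} \<and> pairwise disjnt \<V> \<and>
             (\<forall>V \<in> \<V>. openin M1 V \<and> homeomorphic_map (subtopology M1 V) (subtopology M U) p))"
    using cov unfolding finite_covering_map_def by blast+
  have main: "\<exists>n>0. (g ^^ n) ` W \<inter> W \<noteq> {}" if y: "y \<in> topspace M1" and W: "openin M1 W" "y \<in> W" for y W
  proof -
    define x0 where "x0 = p y"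
    have x0t: "x0 \<in> topspace M" unfolding x0_def using y pc continuous_map_image_subset_topspace by blast
    obtain U \<V> where U: "openin M U" "x0 \<in> U" and un: "\<Union>\<V> = {e \<in> topspace M1. p e \<in> U}"
      and disj: "pairwise disjnt \<V>"
      and sh: "\<forall>V \<in> \<V>. openin M1 V \<and> homeomorphic_map (subtopology M1 V) (subtopology M U) p"
      using ev x0t by metis
    have hV: "openin M1 V \<and> p ` V = U \<and> inj_on p V \<and> (\<forall>A. openin M1 A \<and> A \<subseteq> V \<longrightarrow> openin M (p ` A))"
      if V: "V \<in> \<V>" for V
      using sh V sheet_facts[of M1 V M U p] U(1) by blast
    have Vt: "V \<subseteq> topspace M1" if "V \<in> \<V>" for V using hV[OF that] openin_subset by blast
    have covr: "\<exists>V\<in>\<V>. e \<in> V" if "e \<in> topspace M1" "p e \<in> U" for e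
      using that un by blast
    obtain V0 where V0: "V0 \<in> \<V>" "y \<in> V0" using covr[OF y] U(2) unfolding x0_def by blast
    define c where "c V = (SOME e. e \<in> V \<and> p e = x0)" for V
    have c: "c V \<in> V \<and> p (c V) = x0" if "V \<in> \<V>" for V
    proof -
      have "\<exists>e. e \<in> V \<and> p e = x0" using hV[OF that] U(2) by (metis imageE)
      then show ?thesis unfolding c_def by (rule someI_ex)
    qed
    have cinj: "inj_on c \<V>"
    proof (rule inj_onI)
      fix V1 V2 assume V1: "V1 \<in> \<V>" and V2: "V2 \<in> \<V>" and eq: "c V1 = c V2"
      have "\<not> disjnt V1 V2" using c[OF V1] c[OF V2] eq unfolding disjnt_def by auto
      then show "V1 = V2" using disj V1 V2 unfolding pairwise_def by blast
    qed
    have "c ` \<V> \<subseteq> {e \<in> topspace M1. p e = x0}" using c Vt by blast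
    then have "finite (c ` \<V>)" using finfib x0t finite_subset by blast
    then have finV: "finite \<V>" using cinj finite_image_iff by blast
    define U' where "U' = p ` (W \<inter> V0)"
    have U'o: "openin M U'" unfolding U'_def using hV[OF V0(1)] W(1) V0(1) by blast
    have x0U': "x0 \<in> U'" unfolding U'_def x0_def using W(2) V0(2) by blast
    have U'U: "U' \<subseteq> U" unfolding U'_def using hV[OF V0(1)] by blast
    define lift where "lift V Q = {e \<in> V. p e \<in> Q}" for V Q
    define P where "P Q \<longleftrightarrow> openin M Q \<and> Q \<noteq> {} \<and> Q \<subseteq> U'" for Q
    have "\<exists>x a b. a < b \<and> (g ^^ a) x \<in> lift V0 U' \<and> (g ^^ b) x \<in> lift V0 U'"
    proof (rule core[where S=\<V> and lift=lift and P=P and Gi="\<lambda>n. g ^^ n"])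
      show "finite \<V>" by (rule finV)
      show "lift V Q \<noteq> {}" if PQ0: "P Q" and VV: "V \<in> \<V>" for Q V
      proof -
        obtain q where q: "q \<in> Q" using PQ0 unfolding P_def by blast
        then have "q \<in> U" using PQ0 U'U unfolding P_def by blast
        then obtain e where "e \<in> V" "p e = q" using hV[OF VV] by (metis imageE)
        then show ?thesis using q unfolding lift_def by blast
      qed
      show "(g ^^ 0) z = z" for z by simp
      show "(g ^^ (m + n)) z = (g ^^ m) ((g ^^ n) z)" for m n z by (simp add: funpow_add)
      show "P U'" unfolding P_def using U'o x0U' by blast
      show "V0 \<in> \<V>" by (rule V0(1))
      show "\<exists>Q' n \<pi>. P Q' \<and> (\<forall>\<sigma>. lift \<sigma> Q' \<subseteq> lift \<sigma> Q) \<and> n > 0 \<and> \<pi> ` \<V> \<subseteq> \<V> \<and> inj_on \<pi> \<V>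
        \<and> (\<forall>\<sigma>\<in>\<V>. \<forall>x\<in>lift \<sigma> Q'. (g ^^ n) x \<in> lift (\<pi> \<sigma>) Q)" if PQ: "P Q" for Q
      proof -
        have Q: "openin M Q" "Q \<noteq> {}" "Q \<subseteq> U" using PQ U'U unfolding P_def by auto
        obtain Q' n \<pi> where R: "openin M Q' \<and> Q' \<noteq> {} \<and> Q' \<subseteq> Q" "n > 0" "\<pi> ` \<V> \<subseteq> \<V>" "inj_on \<pi> \<V>"
          "\<forall>V\<in>\<V>. \<forall>e\<in>V. p e \<in> Q' \<longrightarrow> (g ^^ n) e \<in> \<pi> V \<and> p ((g ^^ n) e) \<in> Q"
        proof -
          have "\<exists>Q' n \<pi>. (openin M Q' \<and> Q' \<noteq> {} \<and> Q' \<subseteq> Q) \<and> n > 0 \<and> \<pi> ` \<V> \<subseteq> \<V> \<and> inj_on \<pi> \<V>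
             \<and> (\<forall>V\<in>\<V>. \<forall>e\<in>V. p e \<in> Q' \<longrightarrow> (g ^^ n) e \<in> \<pi> V \<and> p ((g ^^ n) e) \<in> Q)"
          proof (rule stage2_step)
            show "finite \<V>" by (rule finV)
            show "\<And>V. V\<in>\<V> \<Longrightarrow> openin M1 V \<and> p ` V = U \<and> inj_on p V \<and> (\<forall>A. openin M1 A \<and> A \<subseteq> V \<longrightarrow> openin M (p ` A))"
              by (rule hV)
            show "pairwise disjnt \<V>" by (rule disj)
            show "\<And>e. e \<in> topspace M1 \<Longrightarrow> p e \<in> U \<Longrightarrow> \<exists>V\<in>\<V>. e \<in> V" by (rule covr)
          qed (fact hg liftg hc pc nwh Q)+
          then show ?thesis using that by blast
        qed
        have "P Q'" using R(1) PQ unfolding P_def by blast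
        moreover have "\<forall>\<sigma>. lift \<sigma> Q' \<subseteq> lift \<sigma> Q" using R(1) unfolding lift_def by blast
        moreover have "\<forall>\<sigma>\<in>\<V>. \<forall>x\<in>lift \<sigma> Q'. (g ^^ n) x \<in> lift (\<pi> \<sigma>) Q"
          using R(5) unfolding lift_def by blast
        ultimately show ?thesis using R(2,3,4) by (intro exI[of _ Q'] exI[of _ n] exI[of _ \<pi>]) simp
      qed
    qed
    then obtain x a b where ab: "a < b" "(g ^^ a) x \<in> lift V0 U'" "(g ^^ b) x \<in> lift V0 U'" by blast
    have sub: "lift V0 U' \<subseteq> W"
    proof
      fix e assume "e \<in> lift V0 U'"
      then have e: "e \<in> V0" "p e \<in> p ` (W \<inter> V0)" unfolding lift_def U'_def by auto
      then obtain w where w: "w \<in> W \<inter> V0" "p e = p w" by (metis imageE)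
      then have "e = w" using e(1) hV[OF V0(1)] unfolding inj_on_def by blast
      then show "e \<in> W" using w by blast
    qed
    have "(g ^^ (b - a)) ((g ^^ a) x) = (g ^^ (b - a + a)) x" by (simp add: funpow_add)
    also have "\<dots> = (g ^^ b) x" using ab(1) by simp
    finally have eq: "(g ^^ (b - a)) ((g ^^ a) x) = (g ^^ b) x" .
    have "(g ^^ b) x \<in> (g ^^ (b - a)) ` W" using ab(2) sub eq by (metis image_eqI subsetD)
    then have "(g ^^ b) x \<in> (g ^^ (b - a)) ` W \<inter> W" using ab(3) sub by blast
    then have "(g ^^ (b - a)) ` W \<inter> W \<noteq> {}" by blast
    moreover have "b - a > 0" using ab(1) by simp
    ultimately show ?thesis by blast
  qed
  have "y \<in> non_wandering_set M1 g" if "y \<in> topspace M1" for y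
    unfolding non_wandering_set_def using that main by blast
  moreover have "non_wandering_set M1 g \<subseteq> topspace M1" unfolding non_wandering_set_def by (rule Collect_subset)
  ultimately show ?thesis by (intro subset_antisym subsetI) auto
qed


theorem mainTheorem11:
  fixes M :: "'a topology" and M1 :: "'b topology"
    and f :: "'a \<Rightarrow> 'a" and g :: "'b \<Rightarrow> 'b" and p :: "'b \<Rightarrow> 'a" and k :: nat
  assumes "topological_manifold M" and "compact_space M"
    and "homeomorphic_map M M f"
    and "non_wandering_set M f = topspace M"
    and "finite_covering_map M1 M p"
    and "k \<ge> 1"
    and "homeomorphic_map M1 M1 g"
    and "\<forall>y \<in> topspace M1. p (g y) = (f ^^ k) (p y)"
  shows "non_wandering_set M1 g = topspace M1"
proof -
  have c: "continuous_map M M f" using homeomorphic_imp_continuous_map[OF assms(3)] .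
  have hc: "continuous_map M M (f ^^ k)" using continuous_map_funpow[OF c] .
  have nw: "non_wandering_set M (f ^^ k) = topspace M" using stage1[OF c assms(4) assms(6)] .
  show ?thesis by (rule stage2[OF assms(5) assms(7) hc nw assms(8)])
qed

end
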